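(* Let $A$ be a hyperoperator on $\mathbb{R}^n$ on the complex Banach space $X$ and let $f\in\mathcal{E}(\mathbb{R}^n,\mathbb{R}^m)$ be proper. Then $f_*A=[0_X]$ if and only if $f(a)=0$, i.e. $f(a)x=0$ for all $x\in D_A$. In particular, $A=[0_X]$ if and only if $a=0$ (i.e. $a_jx=0$ for all $j$ and all $x\in D_A$).
   Context: $X$ is a complex Banach space, $L(X)$ the bounded operators, $e_X$ the identity. $\mathcal{D}(\mathbb{R}^k)=C_c^\infty(\mathbb{R}^k)$ (complex-valued). A hyperoperator on $\mathbb{R}^k$ is a linear map $A:\mathcal{D}(\mathbb{R}^k)\to L(X)$ which is continuous ($A(\phi_j)\to0$ in operator norm when $\phi_j\to0$ in $\mathcal{D}(\mathbb{R}^k)$), multiplicative ($A(\phi\psi)=A(\phi)A(\psi)$), and such that (i) $D_A:=\bigcup_\phi\operatorname{Im}A(\phi)$ is dense and (ii) $\bigcap_\phi\operatorname{Ker}A(\phi)=\{0\}$. For smooth $f:\mathbb{R}^n\to\mathbb{R}^m$ and $x\in D_A$ written $x=A(\phi)y$, set $f(a)x:=A(f\phi)y$ (well defined, componentwise); $a=(a_1,\dots,a_n)$ with $a_j=f_j(a)$, $f_j(\xi)=\xi_j$. For proper $f$ (preimages of compacts compact), $f_*A$ is the map $\mathcal{D}(\mathbb{R}^m)\ni\phi\mapsto A(\phi\circ f)$. $[0_X]$ denotes the map $\phi\mapsto\phi(0)e_X$ on $\mathcal{D}(\mathbb{R}^k)$ (for the appropriate $k$). *)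

theory Defs
  imports "HOL-Analysis.Analysis"
begin

section \<open>Complex Banach spaces, modelled as real Banach spaces with a complex structure\<close>

text \<open>The complex scalar multiplication on X is given by J (multiplication by i):
  c * x = Re c x + Im c (J x).\<close>

definition cscale :: "('x::real_normed_vector \<Rightarrow>\<^sub>L 'x) \<Rightarrow> complex \<Rightarrow> 'x \<Rightarrow> 'x" where
  "cscale J c x = Re c *\<^sub>R x + Im c *\<^sub>R blinfun_apply J x"

definition complex_structure :: "('x::banach \<Rightarrow>\<^sub>L 'x) \<Rightarrow> bool" where
  "complex_structure J \<longleftrightarrow>
     (\<forall>x. blinfun_apply J (blinfun_apply J x) = - x) \<and>
     (\<forall>c x. norm (cscale J c x) = cmod c * norm x)"

definition cscaleL :: "('x::real_normed_vector \<Rightarrow>\<^sub>L 'x) \<Rightarrow> complex \<Rightarrow> ('x \<Rightarrow>\<^sub>L 'x) \<Rightarrow> ('x \<Rightarrow>\<^sub>L 'x)" where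
  "cscaleL J c T = Re c *\<^sub>R T + Im c *\<^sub>R (J o\<^sub>L T)"

text \<open>L(X): bounded complex-linear operators (real bounded linear and commuting with J).\<close>
definition in_LX :: "('x::real_normed_vector \<Rightarrow>\<^sub>L 'x) \<Rightarrow> ('x \<Rightarrow>\<^sub>L 'x) \<Rightarrow> bool" where
  "in_LX J T \<longleftrightarrow> J o\<^sub>L T = T o\<^sub>L J"

fun iter_partial :: "'n::finite list \<Rightarrow> (real^'n \<Rightarrow> 'b::real_normed_vector) \<Rightarrow> real^'n \<Rightarrow> 'b" where
  "iter_partial [] g = g"
| "iter_partial (i # is) g = (\<lambda>x. frechet_derivative (iter_partial is g) (at x) (axis i 1))"

definition smooth :: "(real^'n::finite \<Rightarrow> 'b::real_normed_vector) \<Rightarrow> bool" where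
  "smooth g \<longleftrightarrow> (\<forall>is x. iter_partial is g differentiable (at x))"

definition tsupport :: "(real^'n::finite \<Rightarrow> 'b::zero) \<Rightarrow> (real^'n) set" where
  "tsupport g = closure {x. g x \<noteq> 0}"

definition test_fn :: "(real^'n::finite \<Rightarrow> complex) \<Rightarrow> bool" where
  "test_fn \<phi> \<longleftrightarrow> smooth \<phi> \<and> compact (tsupport \<phi>)"

definition D_tendsto0 :: "(nat \<Rightarrow> real^'n::finite \<Rightarrow> complex) \<Rightarrow> bool" where
  "D_tendsto0 \<phi>s \<longleftrightarrow> (\<forall>j. test_fn (\<phi>s j)) \<and>
     (\<exists>K. compact K \<and> (\<forall>j. tsupport (\<phi>s j) \<subseteq> K)) \<and>
     (\<forall>is. uniform_limit UNIV (\<lambda>j. iter_partial is (\<phi>s j)) (\<lambda>x. 0) sequentially)"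

definition hyperoperator ::
  "('x::banach \<Rightarrow>\<^sub>L 'x) \<Rightarrow> ((real^'n::finite \<Rightarrow> complex) \<Rightarrow> ('x \<Rightarrow>\<^sub>L 'x)) \<Rightarrow> bool" where
  "hyperoperator J A \<longleftrightarrow>
     (\<forall>\<phi>. test_fn \<phi> \<longrightarrow> in_LX J (A \<phi>)) \<and>
     (\<forall>\<phi> \<psi>. test_fn \<phi> \<longrightarrow> test_fn \<psi> \<longrightarrow> A (\<lambda>x. \<phi> x + \<psi> x) = A \<phi> + A \<psi>) \<and>
     (\<forall>c \<phi>. test_fn \<phi> \<longrightarrow> A (\<lambda>x. c * \<phi> x) = cscaleL J c (A \<phi>)) \<and>
     (\<forall>\<phi>s. D_tendsto0 \<phi>s \<longrightarrow> (\<lambda>j. norm (A (\<phi>s j))) \<longlonglongrightarrow> 0) \<and>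
     (\<forall>\<phi> \<psi>. test_fn \<phi> \<longrightarrow> test_fn \<psi> \<longrightarrow> A (\<lambda>x. \<phi> x * \<psi> x) = A \<phi> o\<^sub>L A \<psi>) \<and>
     closure (\<Union>\<phi>\<in>{\<phi>. test_fn \<phi>}. range (blinfun_apply (A \<phi>))) = UNIV \<and>
     (\<forall>x. (\<forall>\<phi>. test_fn \<phi> \<longrightarrow> blinfun_apply (A \<phi>) x = 0) \<longrightarrow> x = 0)"

definition D_A :: "((real^'n::finite \<Rightarrow> complex) \<Rightarrow> ('x::real_normed_vector \<Rightarrow>\<^sub>L 'x)) \<Rightarrow> 'x set" where
  "D_A A = (\<Union>\<phi>\<in>{\<phi>. test_fn \<phi>}. range (blinfun_apply (A \<phi>)))"

text \<open>f(a)x for x = A(\<phi>) y: the j-th component is A(f_j \<phi>) y (well defined by the paper;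
  here a representation is chosen).\<close>
definition fcalc ::
  "((real^'n::finite \<Rightarrow> complex) \<Rightarrow> ('x::real_normed_vector \<Rightarrow>\<^sub>L 'x)) \<Rightarrow> (real^'n \<Rightarrow> real^'m::finite) \<Rightarrow> 'x \<Rightarrow> 'm \<Rightarrow> 'x" where
  "fcalc A f x = (let (\<phi>, y) = (SOME (\<phi>, y). test_fn \<phi> \<and> x = blinfun_apply (A \<phi>) y)
                  in (\<lambda>j. blinfun_apply (A (\<lambda>\<xi>. complex_of_real (f \<xi> $ j) * \<phi> \<xi>)) y))"

definition pushforward ::
  "(real^'n::finite \<Rightarrow> real^'m::finite) \<Rightarrow> ((real^'n \<Rightarrow> complex) \<Rightarrow> 'c) \<Rightarrow> (real^'m \<Rightarrow> complex) \<Rightarrow> 'c" where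
  "pushforward f A = (\<lambda>\<psi>. A (\<psi> \<circ> f))"

text \<open>Equality to [0_X] as maps on D(R^k): B \<psi> = \<psi>(0) e_X for all test functions \<psi>.\<close>
definition is_zero_hyp ::
  "('x::real_normed_vector \<Rightarrow>\<^sub>L 'x) \<Rightarrow> ((real^'k::finite \<Rightarrow> complex) \<Rightarrow> ('x \<Rightarrow>\<^sub>L 'x)) \<Rightarrow> bool" where
  "is_zero_hyp J B \<longleftrightarrow> (\<forall>\<psi>. test_fn \<psi> \<longrightarrow> B \<psi> = cscaleL J (\<psi> 0) id_blinfun)"

definition proper_fun :: "('a::topological_space \<Rightarrow> 'b::topological_space) \<Rightarrow> bool" where
  "proper_fun f \<longleftrightarrow> (\<forall>K. compact K \<longrightarrow> compact (f -` K))"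

end

theory Submission
  imports Defs
begin


definition partial :: "'n::finite \<Rightarrow> (real^'n \<Rightarrow> 'b::real_normed_vector) \<Rightarrow> real^'n \<Rightarrow> 'b" where
  "partial i g = (\<lambda>x. frechet_derivative g (at x) (axis i 1))"

lemma iter_partial_snoc: "iter_partial (xs @ [i]) g = iter_partial xs (partial i g)"
  by (induction xs) (simp_all add: partial_def)

lemma smooth_iff: "smooth g \<longleftrightarrow> (\<forall>x. g differentiable (at x)) \<and> (\<forall>i. smooth (partial i g))"
proof
  assume s: "smooth g"
  have "\<forall>x. g differentiable at x" using s[unfolded smooth_def, rule_format, of "[]"] by simp
  moreover have "smooth (partial i g)" for i
    unfolding smooth_def using s[unfolded smooth_def] iter_partial_snoc by metis
  ultimately show "(\<forall>x. g differentiable (at x)) \<and> (\<forall>i. smooth (partial i g))" by blast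
next
  assume h: "(\<forall>x. g differentiable (at x)) \<and> (\<forall>i. smooth (partial i g))"
  show "smooth g" unfolding smooth_def
  proof (intro allI)
    fix xs x show "iter_partial xs g differentiable at x"
    proof (cases xs rule: rev_cases)
      case Nil then show ?thesis using h by simp
    next
      case (snoc ys i) then show ?thesis using h iter_partial_snoc smooth_def by metis
    qed
  qed
qed

fun smk :: "nat \<Rightarrow> (real^'n::finite \<Rightarrow> 'b::real_normed_vector) \<Rightarrow> bool" where
  "smk 0 g = True"
| "smk (Suc k) g = ((\<forall>x. g differentiable (at x)) \<and> (\<forall>i. smk k (partial i g)))"

lemma smooth_smk:
  fixes g :: "real^'n::finite \<Rightarrow> 'b::real_normed_vector"
  shows "smooth g \<longleftrightarrow> (\<forall>k. smk k g)"
proof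
  assume "smooth g"
  moreover have "\<forall>g. smooth g \<longrightarrow> smk k (g:: real^'n::finite \<Rightarrow> 'b::real_normed_vector)" for k
  proof (induction k)
    case (Suc k)
    show ?case
    proof (intro allI impI)
      fix g :: "real^'n \<Rightarrow> 'b" assume "smooth g"
      then have "(\<forall>x. g differentiable (at x)) \<and> (\<forall>i. smooth (partial i g))" by (subst (asm) smooth_iff)
      then show "smk (Suc k) g" using Suc by simp
    qed
  qed simp
  ultimately show "\<forall>k. smk k g" by blast
next
  assume a: "\<forall>k. smk k g"
  have "\<forall>g::real^'n \<Rightarrow> 'b. (\<forall>k. smk k g) \<longrightarrow> iter_partial xs g differentiable at x" for xs x
  proof (induction xs rule: rev_induct)
    case Nil show ?case
    proof (intro allI impI)
      fix g :: "real^'n \<Rightarrow> 'b" assume "\<forall>k. smk k g"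
      then have "smk (Suc 0) g" by blast
      then show "iter_partial [] g differentiable at x" by simp
    qed
  next
    case (snoc i ys)
    show ?case
    proof (intro allI impI)
      fix g :: "real^'n \<Rightarrow> 'b" assume "\<forall>k. smk k g"
      then have "\<forall>k. smk k (partial i g)"
      proof (intro allI)
        fix k assume "\<forall>k. smk k g"
        then have "smk (Suc k) g" by blast
        then show "smk k (partial i g)" by simp
      qed
      then have "iter_partial ys (partial i g) differentiable at x"
        using snoc.IH by blast
      then show "iter_partial (ys @ [i]) g differentiable at x"
        by (simp add: iter_partial_snoc)
    qed
  qed
  then show "smooth g" using a unfolding smooth_def by blast
qed

lemma fdw: "f differentiable F \<Longrightarrow> (f has_derivative frechet_derivative f F) F"
  using frechet_derivative_works by blast

lemma partial_eq: "(g has_derivative D) (at x) \<Longrightarrow> partial i g x = D (axis i 1)"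
  using frechet_derivative_at by (metis partial_def)

lemma smk_mono: "smk (Suc k) g \<Longrightarrow> smk k g"
  by (induction k arbitrary: g) auto

lemma partial_const: "partial i (\<lambda>x. c) = (\<lambda>x. 0)"
  by (rule ext, rule partial_eq) (rule has_derivative_const)

lemma smk_const: "smk k (\<lambda>x::real^'n::finite. c::'b::real_normed_vector)"
proof (induction k arbitrary: c)
  case (Suc k) then show ?case by (simp add: partial_const)
qed simp

lemma partial_linear:
  assumes L: "bounded_linear L" and d: "\<forall>x. g differentiable (at x)"
  shows "partial i (\<lambda>x. L (g x)) = (\<lambda>x. L (partial i g x))"
proof
  fix x
  have "(g has_derivative frechet_derivative g (at x)) (at x)" using d fdw by blast
  then have "((\<lambda>x. L (g x)) has_derivative (\<lambda>v. L (frechet_derivative g (at x) v))) (at x)"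
    using bounded_linear.has_derivative[OF L] by blast
  from partial_eq[OF this, of i] show "partial i (\<lambda>x. L (g x)) x = L (partial i g x)" by (simp add: partial_def)
qed

lemma smk_linear: "bounded_linear L \<Longrightarrow> smk k g \<Longrightarrow> smk k (\<lambda>x. L (g x))"
proof (induction k arbitrary: g)
  case (Suc k)
  have d: "\<forall>x. g differentiable (at x)" using Suc.prems by simp
  have "\<forall>x. (\<lambda>x. L (g x)) differentiable (at x)"
  proof
    fix x show "(\<lambda>x. L (g x)) differentiable (at x)"
      using bounded_linear.has_derivative[OF Suc.prems(1) fdw[OF d[rule_format, of x]]]
      by (auto simp: differentiable_def)
  qed
  then show ?case using Suc partial_linear[OF Suc.prems(1) d] by simp
qed simp

lemma partial_add:
  assumes "\<forall>x. f differentiable (at x)" "\<forall>x. g differentiable (at x)"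
  shows "partial i (\<lambda>x. f x + g x) = (\<lambda>x. partial i f x + partial i g x)"
proof
  fix x
  have "((\<lambda>x. f x + g x) has_derivative (\<lambda>v. frechet_derivative f (at x) v + frechet_derivative g (at x) v)) (at x)"
    using has_derivative_add[OF fdw[of f "at x"] fdw[of g "at x"]] assms by blast
  from partial_eq[OF this, of i] show "partial i (\<lambda>x. f x + g x) x = partial i f x + partial i g x" by (simp add: partial_def)
qed

lemma smk_add: "smk k f \<Longrightarrow> smk k g \<Longrightarrow> smk k (\<lambda>x. f x + g x)"
proof (induction k arbitrary: f g)
  case (Suc k)
  have da: "\<forall>x. f differentiable (at x)" and dg: "\<forall>x. g differentiable (at x)" using Suc.prems by auto
  have d: "(\<lambda>x. f x + g x) differentiable (at x)" for x using da dg by (simp add: differentiable_add)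
  have "smk k (partial i (\<lambda>x. f x + g x))" for i
  proof -
    have p1: "smk k (partial i f)" using Suc.prems(1) by simp
    have p2: "smk k (partial i g)" using Suc.prems(2) by simp
    show ?thesis unfolding partial_add[OF da dg]
      by (intro Suc.IH p1 p2)
  qed
  then show ?case using d by simp
qed simp

lemma partial_scaleR:
  fixes a :: "real^'n::finite \<Rightarrow> real"
  assumes "\<forall>x. a differentiable (at x)" "\<forall>x. g differentiable (at x)"
  shows "partial i (\<lambda>x. a x *\<^sub>R g x) = (\<lambda>x. a x *\<^sub>R partial i g x + partial i a x *\<^sub>R g x)"
proof
  fix x
  have "((\<lambda>x. a x *\<^sub>R g x) has_derivative (\<lambda>v. a x *\<^sub>R frechet_derivative g (at x) v + frechet_derivative a (at x) v *\<^sub>R g x)) (at x)"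
    using has_derivative_scaleR[OF fdw[of a "at x"] fdw[of g "at x"]] assms by blast
  from partial_eq[OF this, of i] show "partial i (\<lambda>x. a x *\<^sub>R g x) x = a x *\<^sub>R partial i g x + partial i a x *\<^sub>R g x" by (simp add: partial_def)
qed

lemma smk_scaleR: "smk k (a:: real^'n::finite \<Rightarrow> real) \<Longrightarrow> smk k g \<Longrightarrow> smk k (\<lambda>x. a x *\<^sub>R g x)"
proof (induction k arbitrary: a g)
  case (Suc k)
  have da: "\<forall>x. a differentiable (at x)" and dg: "\<forall>x. g differentiable (at x)" using Suc.prems by auto
  have s1: "smk k a" using Suc.prems(1) smk_mono by blast
  have s2: "smk k g" using Suc.prems(2) smk_mono by blast
  have d: "(\<lambda>x. a x *\<^sub>R g x) differentiable (at x)" for x using da dg by (simp add: differentiable_scaleR)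
  have "smk k (partial i (\<lambda>x. a x *\<^sub>R g x))" for i
  proof -
    have p1: "smk k (partial i a)" using Suc.prems(1) by simp
    have p2: "smk k (partial i g)" using Suc.prems(2) by simp
    show ?thesis unfolding partial_scaleR[OF da dg]
      by (intro smk_add Suc.IH s1 s2 p1 p2)
  qed
  then show ?case using d by simp
qed simp

lemma partial_mult:
  fixes f g :: "real^'n::finite \<Rightarrow> 'b::real_normed_algebra"
  assumes "\<forall>x. f differentiable (at x)" "\<forall>x. g differentiable (at x)"
  shows "partial i (\<lambda>x. f x * g x) = (\<lambda>x. f x * partial i g x + partial i f x * g x)"
proof
  fix x
  have "((\<lambda>x. f x * g x) has_derivative (\<lambda>v. f x * frechet_derivative g (at x) v + frechet_derivative f (at x) v * g x)) (at x)"
    using has_derivative_mult[OF fdw[of f "at x"] fdw[of g "at x"]] assms by blast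
  from partial_eq[OF this, of i] show "partial i (\<lambda>x. f x * g x) x = f x * partial i g x + partial i f x * g x" by (simp add: partial_def)
qed

lemma smk_mult: "smk k (f:: real^'n::finite \<Rightarrow> 'b::real_normed_algebra) \<Longrightarrow> smk k g \<Longrightarrow> smk k (\<lambda>x. f x * g x)"
proof (induction k arbitrary: f g)
  case (Suc k)
  have da: "\<forall>x. f differentiable (at x)" and dg: "\<forall>x. g differentiable (at x)" using Suc.prems by auto
  have s1: "smk k f" using Suc.prems(1) smk_mono by blast
  have s2: "smk k g" using Suc.prems(2) smk_mono by blast
  have d: "(\<lambda>x. f x * g x) differentiable (at x)" for x using da dg by (simp add: differentiable_mult)
  have "smk k (partial i (\<lambda>x. f x * g x))" for i
  proof -
    have p1: "smk k (partial i f)" using Suc.prems(1) by simp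
    have p2: "smk k (partial i g)" using Suc.prems(2) by simp
    show ?thesis unfolding partial_mult[OF da dg]
      by (intro smk_add Suc.IH s1 s2 p1 p2)
  qed
  then show ?case using d by simp
qed simp

lemma smk_sum: "finite S \<Longrightarrow> (\<And>j. j \<in> S \<Longrightarrow> smk k (g j)) \<Longrightarrow> smk k (\<lambda>x. \<Sum>j\<in>S. g j x)"
  by (induction S rule: finite_induct) (auto intro: smk_add smk_const)

lemma smooth_const: "smooth (\<lambda>x. c)" by (simp add: smooth_smk smk_const)
lemma smooth_linear: "bounded_linear L \<Longrightarrow> smooth g \<Longrightarrow> smooth (\<lambda>x. L (g x))"
  by (simp add: smooth_smk smk_linear)
lemma smooth_add: "smooth f \<Longrightarrow> smooth g \<Longrightarrow> smooth (\<lambda>x. f x + g x)"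
  by (simp add: smooth_smk smk_add)
lemma smooth_scaleR: "smooth (a:: real^'n::finite \<Rightarrow> real) \<Longrightarrow> smooth g \<Longrightarrow> smooth (\<lambda>x. a x *\<^sub>R g x)"
  by (simp add: smooth_smk smk_scaleR)
lemma smooth_mult: "smooth (f:: real^'n::finite \<Rightarrow> 'b::real_normed_algebra) \<Longrightarrow> smooth g \<Longrightarrow> smooth (\<lambda>x. f x * g x)"
  by (simp add: smooth_smk smk_mult)
lemma smooth_sum: "finite S \<Longrightarrow> (\<And>j. j \<in> S \<Longrightarrow> smooth (g j)) \<Longrightarrow> smooth (\<lambda>x. \<Sum>j\<in>S. g j x)"
  by (simp add: smooth_smk smk_sum)



lemma basis_exp_real: "(\<Sum>j\<in>UNIV. (v$j) *\<^sub>R axis j (1::real)) = v"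
  using basis_expansion[of v] by (simp add: scalar_mult_eq_scaleR)

lemma partial_comp:
  fixes \<psi> :: "real^'m::finite \<Rightarrow> 'b::real_normed_vector" and f :: "real^'n::finite \<Rightarrow> real^'m"
  assumes d\<psi>: "\<forall>y. \<psi> differentiable (at y)" and df: "\<forall>x. f differentiable (at x)"
  shows "partial i (\<lambda>x. \<psi> (f x)) = (\<lambda>x. \<Sum>j\<in>UNIV. partial i (\<lambda>x. f x $ j) x *\<^sub>R partial j \<psi> (f x))"
proof
  fix x
  define D\<psi> where "D\<psi> = frechet_derivative \<psi> (at (f x))"
  define Df where "Df = frechet_derivative f (at x)"
  have h\<psi>: "(\<psi> has_derivative D\<psi>) (at (f x))" unfolding D\<psi>_def using d\<psi> fdw by blast
  have hf: "(f has_derivative Df) (at x)" unfolding Df_def using df fdw by blast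
  have "((\<lambda>x. \<psi> (f x)) has_derivative (\<lambda>v. D\<psi> (Df v))) (at x)"
    using diff_chain_at[OF hf h\<psi>] by (simp add: o_def)
  then have 1: "partial i (\<lambda>x. \<psi> (f x)) x = D\<psi> (partial i f x)"
    using partial_eq[of _ _ x i] partial_eq[OF hf, of i] by simp
  have lin: "linear D\<psi>" using h\<psi> has_derivative_linear by blast
  have 2: "partial i (\<lambda>x. f x $ j) x = partial i f x $ j" for j
    using partial_linear[OF bounded_linear_vec_nth df, of i j] by (metis)
  have 3: "partial j \<psi> (f x) = D\<psi> (axis j 1)" for j
    using partial_eq[OF h\<psi>] by blast
  have "D\<psi> (partial i f x) = D\<psi> (\<Sum>j\<in>UNIV. (partial i f x $ j) *\<^sub>R axis j (1::real))"
    by (simp add: basis_exp_real)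
  also have "\<dots> = (\<Sum>j\<in>UNIV. (partial i f x $ j) *\<^sub>R D\<psi> (axis j 1))"
    using lin by (simp add: linear_sum linear_cmul o_def)
  finally show "partial i (\<lambda>x. \<psi> (f x)) x = (\<Sum>j\<in>UNIV. partial i (\<lambda>x. f x $ j) x *\<^sub>R partial j \<psi> (f x))"
    using 1 2 3 by simp
qed

lemma smooth_diff: "smooth g \<Longrightarrow> g differentiable (at x)"
  using smooth_iff by blast

lemma smooth_partial: "smooth g \<Longrightarrow> smooth (partial i g)"
  using smooth_iff by blast

lemma smooth_comp_nth: "smooth f \<Longrightarrow> smooth (\<lambda>x. f x $ j)"
  by (rule smooth_linear[OF bounded_linear_vec_nth])

lemma smk_comp:
  fixes f :: "real^'n::finite \<Rightarrow> real^'m::finite"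
  assumes f: "smooth f"
  shows "smooth (\<psi> :: real^'m \<Rightarrow> 'b::real_normed_vector) \<Longrightarrow> smk k (\<lambda>x. \<psi> (f x))"
proof (induction k arbitrary: \<psi>)
  case (Suc k)
  have d\<psi>: "\<forall>y. \<psi> differentiable (at y)" using Suc.prems smooth_diff by blast
  have df: "\<forall>x. f differentiable (at x)" using f smooth_diff by blast
  have d: "(\<lambda>x. \<psi> (f x)) differentiable (at x)" for x
    using differentiable_chain_at[OF df[rule_format] d\<psi>[rule_format]] by (simp add: o_def)
  have "smk k (partial i (\<lambda>x. \<psi> (f x)))" for i
    unfolding partial_comp[OF d\<psi> df]
  proof (rule smk_sum)
    fix j
    have "smk k (partial i (\<lambda>x. f x $ j))"
      using smooth_partial[OF smooth_comp_nth[OF f]] smooth_smk by blast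
    moreover have "smk k (\<lambda>x. partial j \<psi> (f x))"
      using Suc.IH[OF smooth_partial[OF Suc.prems]] .
    ultimately show "smk k (\<lambda>x. partial i (\<lambda>x. f x $ j) x *\<^sub>R partial j \<psi> (f x))"
      by (rule smk_scaleR)
  qed simp
  then show ?case using d by simp
qed simp

lemma smooth_comp:
  fixes f :: "real^'n::finite \<Rightarrow> real^'m::finite" and \<psi> :: "real^'m \<Rightarrow> 'b::real_normed_vector"
  shows "smooth f \<Longrightarrow> smooth \<psi> \<Longrightarrow> smooth (\<lambda>x. \<psi> (f x))"
  using smk_comp smooth_smk by blast

lemma smooth_of_real: "smooth (g :: real^'n::finite \<Rightarrow> real) \<Longrightarrow> smooth (\<lambda>x. complex_of_real (g x))"
  by (rule smooth_linear[OF bounded_linear_of_real])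

lemma smooth_id: "smooth (\<lambda>x::real^'n::finite. x)"
proof -
  have "partial i (\<lambda>x::real^'n. x) = (\<lambda>x. axis i 1)" for i
    by (rule ext, rule partial_eq) (rule has_derivative_ident)
  then show ?thesis using smooth_iff smooth_const by (metis differentiable_ident)
qed

section \<open>Test functions\<close>

lemma compact_closed_subset: "compact K \<Longrightarrow> closed T \<Longrightarrow> T \<subseteq> K \<Longrightarrow> compact T"
  by (metis compact_Int_closed inf.absorb_iff2)

lemma tsupport_mult: "tsupport (\<lambda>x. a x * \<phi> x :: complex) \<subseteq> tsupport \<phi>"
  unfolding tsupport_def by (rule closure_mono) auto

lemma test_fn_mult: "smooth a \<Longrightarrow> test_fn \<phi> \<Longrightarrow> test_fn (\<lambda>x. a x * \<phi> x)"
proof -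
  assume a: "smooth a" "test_fn \<phi>"
  have "compact (tsupport (\<lambda>x. a x * \<phi> x))"
    using compact_closed_subset[OF _ _ tsupport_mult, of \<phi> a] a(2)
    by (simp add: test_fn_def tsupport_def)
  then show ?thesis using a smooth_mult unfolding test_fn_def by blast
qed

lemma test_fn_mult': "test_fn \<phi> \<Longrightarrow> smooth a \<Longrightarrow> test_fn (\<lambda>x. \<phi> x * a x)"
  using test_fn_mult[of a \<phi>] by (simp add: mult.commute)

lemma test_fn_smooth: "test_fn \<phi> \<Longrightarrow> smooth \<phi>" by (simp add: test_fn_def)

lemma test_fn_add: "test_fn \<phi> \<Longrightarrow> test_fn \<psi> \<Longrightarrow> test_fn (\<lambda>x. \<phi> x + \<psi> x)"
proof -
  assume a: "test_fn \<phi>" "test_fn \<psi>"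
  have "tsupport (\<lambda>x. \<phi> x + \<psi> x) \<subseteq> tsupport \<phi> \<union> tsupport \<psi>"
    unfolding tsupport_def closure_Un[symmetric] by (rule closure_mono) auto
  moreover have "compact (tsupport \<phi> \<union> tsupport \<psi>)" using a by (simp add: test_fn_def compact_Un)
  ultimately have "compact (tsupport (\<lambda>x. \<phi> x + \<psi> x))"
    using compact_closed_subset by (metis closed_closure tsupport_def)
  then show ?thesis using a smooth_add unfolding test_fn_def by blast
qed

lemma test_fn_zero: "test_fn (\<lambda>x. 0)"
  unfolding test_fn_def tsupport_def by (simp add: smooth_const)

lemma test_fn_sum: "finite S \<Longrightarrow> (\<And>j. j \<in> S \<Longrightarrow> test_fn (g j)) \<Longrightarrow> test_fn (\<lambda>x. \<Sum>j\<in>S. g j x)"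
  by (induction S rule: finite_induct) (auto intro: test_fn_add test_fn_zero)

lemma test_fn_comp:
  fixes f :: "real^'n::finite \<Rightarrow> real^'m::finite"
  assumes f: "smooth f" "proper_fun f" and \<psi>: "test_fn \<psi>"
  shows "test_fn (\<lambda>x. \<psi> (f x))"
proof -
  have cf: "continuous_on UNIV f"
    using f(1) smooth_diff differentiable_imp_continuous_within continuous_at_imp_continuous_on by blast
  have cl: "closed (f -` tsupport \<psi>)"
    using continuous_closed_vimage[of "tsupport \<psi>" f] cf
    by (simp add: tsupport_def continuous_on_eq_continuous_within)
  have "tsupport (\<lambda>x. \<psi> (f x)) \<subseteq> f -` tsupport \<psi>"
    unfolding tsupport_def
    by (rule closure_minimal) (use closure_subset[of "{x. \<psi> x \<noteq> 0}"] cl[unfolded tsupport_def] in auto)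
  moreover have "compact (f -` tsupport \<psi>)" using f(2) \<psi> by (simp add: proper_fun_def test_fn_def)
  ultimately have "compact (tsupport (\<lambda>x. \<psi> (f x)))"
    using compact_closed_subset by (metis closed_closure tsupport_def)
  then show ?thesis
    using smooth_comp[OF f(1) test_fn_smooth[OF \<psi>]] unfolding test_fn_def by blast
qed



definition H :: "nat \<Rightarrow> real \<Rightarrow> real" where
  "H j t = (if t > 0 then exp (- inverse t) * inverse t ^ j else 0)"

lemma H_lim: "((\<lambda>t. H j t) \<longlongrightarrow> 0) (at_right 0)"
proof -
  have 1: "((\<lambda>s::real. s ^ j / exp s) \<longlongrightarrow> 0) at_top" by (rule tendsto_power_div_exp_0)
  have 2: "((\<lambda>t. inverse t ^ j / exp (inverse t)) \<longlongrightarrow> 0) (at_right (0::real))"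
    using filterlim_compose[OF 1 filterlim_inverse_at_top_right] by (simp add: o_def)
  have 3: "\<forall>\<^sub>F t in at_right (0::real). inverse t ^ j / exp (inverse t) = H j t"
    using eventually_at_right_less[of "0::real"]
    by eventually_elim (simp add: H_def exp_minus field_simps)
  show ?thesis using tendsto_cong[OF 3] 2 by simp
qed

lemma H_nonpos: "t \<le> 0 \<Longrightarrow> H j t = 0" by (simp add: H_def)

lemma H_deriv: "(H j has_real_derivative (H (j+2) t - real j * H (j+1) t)) (at t)"
proof (cases "t > 0")
  case True
  have d1: "((\<lambda>t. exp (- inverse t)) has_real_derivative exp (- inverse t) * inverse t ^ 2) (at t)"
    using True by (auto intro!: derivative_eq_intros simp: power2_eq_square field_simps)
  have d2: "((\<lambda>t. inverse t ^ j) has_real_derivative real j * (- (inverse t ^ Suc (Suc 0)) * inverse t ^ (j - Suc 0))) (at t)"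
    using DERIV_power[OF DERIV_inverse[of t UNIV], of j] True by simp
  have "((\<lambda>t. exp (- inverse t) * inverse t ^ j) has_real_derivative
        (exp (- inverse t) * inverse t ^ 2 * inverse t ^ j
         + real j * (- (inverse t ^ Suc (Suc 0)) * inverse t ^ (j - Suc 0)) * exp (- inverse t))) (at t)"
    using DERIV_mult[OF d1 d2] by simp
  moreover have "exp (- inverse t) * inverse t ^ 2 * inverse t ^ j
         + real j * (- (inverse t ^ Suc (Suc 0)) * inverse t ^ (j - Suc 0)) * exp (- inverse t)
       = H (j+2) t - real j * H (j+1) t"
  proof (cases j)
    case 0 then show ?thesis using True by (simp add: H_def power2_eq_square)
  next
    case (Suc l)
    then show ?thesis using True by (simp add: H_def power2_eq_square field_simps)
  qed
  ultimately have "((\<lambda>t. exp (- inverse t) * inverse t ^ j) has_real_derivative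
        (H (j+2) t - real j * H (j+1) t)) (at t)" by simp
  then show ?thesis
    by (rule has_field_derivative_transform_within_open[where S="{0<..}"]) (use True in \<open>auto simp: H_def\<close>)
next
  case False
  show ?thesis
  proof (cases "t < 0")
    case True
    have "((\<lambda>t. 0) has_real_derivative 0) (at t)" by simp
    then have "(H j has_real_derivative 0) (at t)"
      by (rule has_field_derivative_transform_within_open[where S="{..<0}"]) (use True in \<open>auto simp: H_def\<close>)
    then show ?thesis using True by (simp add: H_def)
  next
    case False
    then have t0: "t = 0" using \<open>\<not> t > 0\<close> by simp
    have r: "((\<lambda>y. (H j y - H j 0) / (y - 0)) \<longlongrightarrow> 0) (at_right 0)"
    proof -
      have e: "H (Suc j) y = (H j y - H j 0) / (y - 0)" if "y > 0" for y
      proof -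
        have "H (Suc j) y = exp (- inverse y) * (inverse y * inverse y ^ j)" using that by (simp add: H_def)
        also have "\<dots> = (exp (- inverse y) * inverse y ^ j) * inverse y" by (simp only: mult_ac)
        also have "\<dots> = (H j y - H j 0) / (y - 0)" using that by (simp add: H_def divide_inverse)
        finally show ?thesis .
      qed
      have "\<forall>\<^sub>F y in at_right (0::real). H (Suc j) y = (H j y - H j 0) / (y - 0)"
        using eventually_at_right_less[of "0::real"] by (rule eventually_mono) (rule e)
      from tendsto_cong[OF this, of 0] H_lim[of "Suc j"] show ?thesis by (rule iffD1)
    qed
    have l: "((\<lambda>y. (H j y - H j 0) / (y - 0)) \<longlongrightarrow> 0) (at_left 0)"
    proof -
      have "\<forall>\<^sub>F y in at_left (0::real). 0 = (H j y - H j 0) / (y - 0)"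
        using eventually_at_left_real[of "-1" 0, simplified]
        by (rule eventually_mono) (simp add: H_def)
      from tendsto_cong[OF this, of 0] show ?thesis by simp
    qed
    have "(H j has_real_derivative 0) (at 0)"
      unfolding has_field_derivative_iff using filterlim_at_split l r by blast
    then show ?thesis using t0 by (simp add: H_def)
  qed
qed

lemma deriv_H: "deriv (H j) = (\<lambda>t. H (j+2) t - real j * H (j+1) t)"
  using H_deriv DERIV_imp_deriv by blast

lemma H_differentiable: "H j differentiable (at t)"
  using H_deriv real_differentiable_def by blast

fun sm1 :: "nat \<Rightarrow> (real \<Rightarrow> real) \<Rightarrow> bool" where
  "sm1 0 h = True"
| "sm1 (Suc k) h = ((\<forall>x. h differentiable (at x)) \<and> sm1 k (deriv h))"

lemma sm1_lin: "sm1 k f \<Longrightarrow> sm1 k g \<Longrightarrow> sm1 k (\<lambda>t. f t - c * g t)"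
proof (induction k arbitrary: f g)
  case (Suc k)
  have df: "\<forall>x. f differentiable (at x)" and dg: "\<forall>x. g differentiable (at x)" using Suc.prems by auto
  have D: "((\<lambda>t. f t - c * g t) has_real_derivative (deriv f x - c * deriv g x)) (at x)" for x
  proof -
    have fD: "DERIV f x :> deriv f x" using df DERIV_deriv_iff_real_differentiable by blast
    have gD: "DERIV g x :> deriv g x" using dg DERIV_deriv_iff_real_differentiable by blast
    show ?thesis using DERIV_diff[OF fD DERIV_cmult[OF gD, of c]] by simp
  qed
  then have "deriv (\<lambda>t. f t - c * g t) = (\<lambda>x. deriv f x - c * deriv g x)"
    using DERIV_imp_deriv by blast
  moreover have "\<forall>x. (\<lambda>t. f t - c * g t) differentiable (at x)"
    using D real_differentiable_def by blast
  ultimately show ?case using Suc by simp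
qed simp

lemma sm1_H: "sm1 k (H j)"
proof (induction k arbitrary: j)
  case (Suc k)
  then show ?case using H_differentiable deriv_H sm1_lin by simp
qed simp

definition smooth1 :: "(real \<Rightarrow> real) \<Rightarrow> bool" where
  "smooth1 h \<longleftrightarrow> (\<forall>k. sm1 k h)"

lemma smooth1_deriv: "smooth1 h \<Longrightarrow> smooth1 (deriv h) \<and> (\<forall>x. h differentiable (at x))"
  unfolding smooth1_def by (metis sm1.simps(2))

lemma partial_comp1:
  fixes q :: "real^'n::finite \<Rightarrow> real"
  assumes dh: "\<forall>y. h differentiable (at y)" and dq: "\<forall>x. q differentiable (at x)"
  shows "partial i (\<lambda>x. h (q x)) = (\<lambda>x. deriv h (q x) * partial i q x)"
proof
  fix x
  have hh: "(h has_derivative (\<lambda>u. deriv h (q x) * u)) (at (q x))"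
    using dh DERIV_deriv_iff_real_differentiable has_field_derivative_imp_has_derivative by blast
  have hq: "(q has_derivative frechet_derivative q (at x)) (at x)" using dq fdw by blast
  have "((\<lambda>x. h (q x)) has_derivative (\<lambda>v. deriv h (q x) * frechet_derivative q (at x) v)) (at x)"
    using diff_chain_at[OF hq hh] by (simp add: o_def)
  from partial_eq[OF this, of i] show "partial i (\<lambda>x. h (q x)) x = deriv h (q x) * partial i q x"
    by (simp add: partial_def)
qed

lemma smk_comp1:
  fixes q :: "real^'n::finite \<Rightarrow> real"
  assumes q: "smooth q"
  shows "smooth1 h \<Longrightarrow> smk k (\<lambda>x. h (q x))"
proof (induction k arbitrary: h)
  case (Suc k)
  have dh: "\<forall>y. h differentiable (at y)" and s': "smooth1 (deriv h)" using smooth1_deriv[OF Suc.prems] by auto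
  have dq: "\<forall>x. q differentiable (at x)" using q smooth_diff by blast
  have d: "(\<lambda>x. h (q x)) differentiable (at x)" for x
    using differentiable_chain_at[OF dq[rule_format] dh[rule_format]] by (simp add: o_def)
  have "smk k (partial i (\<lambda>x. h (q x)))" for i
    unfolding partial_comp1[OF dh dq]
  proof (rule smk_mult)
    show "smk k (\<lambda>x. deriv h (q x))" using Suc.IH[OF s'] .
    show "smk k (partial i q)" using smooth_partial[OF q] smooth_smk by blast
  qed
  then show ?case using d by simp
qed simp

lemma smooth_comp1: "smooth (q :: real^'n::finite \<Rightarrow> real) \<Longrightarrow> smooth1 h \<Longrightarrow> smooth (\<lambda>x. h (q x))"
  using smk_comp1 smooth_smk by blast

lemma bump_exists: "\<exists>\<beta> :: real^'m::finite \<Rightarrow> real. smooth \<beta> \<and> test_fn (\<lambda>x. complex_of_real (\<beta> x)) \<and> \<beta> 0 = exp (-1)"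
proof -
  define q :: "real^'m \<Rightarrow> real" where "q = (\<lambda>x. 1 + (-1) *\<^sub>R (\<Sum>j\<in>UNIV. x $ j * x $ j))"
  have sq: "smooth q" unfolding q_def
    by (intro smooth_add smooth_const smooth_scaleR smooth_sum smooth_mult smooth_comp_nth smooth_id) simp
  define \<beta> where "\<beta> = (\<lambda>x. H 0 (q x))"
  have sb: "smooth \<beta>" unfolding \<beta>_def
    using smooth_comp1[OF sq] sm1_H smooth1_def by blast
  have qn: "q x = 1 - norm x ^ 2" for x
    by (simp add: q_def power2_norm_eq_inner inner_vec_def)
  have sub: "{x. complex_of_real (\<beta> x) \<noteq> 0} \<subseteq> cball 0 1"
  proof
    fix x assume "x \<in> {x. complex_of_real (\<beta> x) \<noteq> 0}"
    then have "q x > 0" unfolding \<beta>_def H_def by (auto split: if_splits)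
    then have "norm x ^ 2 < 1 ^ 2" using qn by simp
    then have "norm x < 1" using power_less_imp_less_base by fastforce
    then show "x \<in> cball 0 1" by simp
  qed
  have "tsupport (\<lambda>x. complex_of_real (\<beta> x)) \<subseteq> cball 0 1"
    unfolding tsupport_def by (rule closure_minimal[OF sub]) simp
  then have "compact (tsupport (\<lambda>x. complex_of_real (\<beta> x)))"
    using compact_closed_subset[OF compact_cball] by (metis closed_closure tsupport_def)
  moreover have "\<beta> 0 = exp (-1)" by (simp add: \<beta>_def q_def H_def)
  ultimately show ?thesis using sb smooth_of_real[OF sb] unfolding test_fn_def by blast
qed



definition Iint :: "nat \<Rightarrow> (real^'m::finite \<Rightarrow> 'b::banach) \<Rightarrow> real^'m \<Rightarrow> 'b" where
  "Iint k g \<eta> = integral {0..1} (\<lambda>t. (t ^ k) *\<^sub>R g (t *\<^sub>R \<eta>))"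

lemma smooth_continuous: "smooth g \<Longrightarrow> continuous_on S g"
  by (meson continuous_at_imp_continuous_on differentiable_imp_continuous_within smooth_diff)

lemma fd_expand:
  assumes "(\<psi> has_derivative D) (at z)"
  shows "D v = (\<Sum>j\<in>UNIV. (v $ j) *\<^sub>R partial j \<psi> z)"
proof -
  have lin: "linear D" using assms has_derivative_linear by blast
  have "D v = D (\<Sum>j\<in>UNIV. (v$j) *\<^sub>R axis j (1::real))" by (simp add: basis_exp_real)
  also have "\<dots> = (\<Sum>j\<in>UNIV. (v$j) *\<^sub>R D (axis j 1))"
    using lin by (simp add: linear_sum linear_cmul o_def)
  finally show ?thesis using partial_eq[OF assms] by simp
qed

lemma Iint_deriv:
  fixes g :: "real^'m::finite \<Rightarrow> 'b::banach"
  assumes g: "smooth g"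
  shows "(\<forall>\<eta>. Iint k g differentiable (at \<eta>)) \<and> partial i (Iint k g) = Iint (Suc k) (partial i g)"
proof -
  define DgB where "DgB z = Blinfun (frechet_derivative g (at z))" for z
  have hd: "(g has_derivative frechet_derivative g (at z)) (at z)" for z
    using g smooth_diff fdw by blast
  have DgB_apply: "blinfun_apply (DgB z) = frechet_derivative g (at z)" for z
    unfolding DgB_def using has_derivative_bounded_linear[OF hd] bounded_linear_Blinfun_apply by blast
  have cDgB: "continuous_on UNIV DgB"
  proof (rule continuous_at_imp_continuous_on, intro ballI continuous_blinfun_componentwiseI1)
    fix z :: "real^'m" and b :: "real^'m" assume "b \<in> Basis"
    then obtain j where b: "b = axis j 1" using axis_inverse by blast
    have "(\<lambda>x. DgB x b) = partial j g" unfolding b DgB_apply partial_def by simp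
    moreover have "continuous (at z) (partial j g)"
      using smooth_partial[OF g] smooth_diff differentiable_imp_continuous_within by blast
    ultimately show "continuous (at z) (\<lambda>x. DgB x b)" by simp
  qed
  define fx where "fx \<eta> t = (t ^ Suc k) *\<^sub>R DgB (t *\<^sub>R \<eta>)" for \<eta> :: "real^'m" and t :: real
  have cg: "continuous_on UNIV g" using smooth_continuous[OF g] .
  have der: "((\<lambda>\<eta>. (t ^ k) *\<^sub>R g (t *\<^sub>R \<eta>)) has_derivative blinfun_apply (fx \<eta> t)) (at \<eta> within UNIV)"
    for \<eta> t
  proof -
    have "((\<lambda>\<eta>. t *\<^sub>R \<eta>) has_derivative (\<lambda>v. t *\<^sub>R v)) (at \<eta>)"
      by (intro derivative_eq_intros) auto
    from diff_chain_at[OF this hd]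
    have "((\<lambda>\<eta>. g (t *\<^sub>R \<eta>)) has_derivative (\<lambda>v. frechet_derivative g (at (t *\<^sub>R \<eta>)) (t *\<^sub>R v))) (at \<eta>)"
      by (simp add: o_def)
    from has_derivative_scaleR_right[OF this, of "t ^ k"]
    have "((\<lambda>\<eta>. (t ^ k) *\<^sub>R g (t *\<^sub>R \<eta>)) has_derivative
          (\<lambda>v. (t ^ k) *\<^sub>R frechet_derivative g (at (t *\<^sub>R \<eta>)) (t *\<^sub>R v))) (at \<eta>)" .
    moreover have "(\<lambda>v. (t ^ k) *\<^sub>R frechet_derivative g (at (t *\<^sub>R \<eta>)) (t *\<^sub>R v)) = blinfun_apply (fx \<eta> t)"
    proof
      fix v
      have "frechet_derivative g (at (t *\<^sub>R \<eta>)) (t *\<^sub>R v) = t *\<^sub>R frechet_derivative g (at (t *\<^sub>R \<eta>)) v"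
        using DgB_apply[of "t *\<^sub>R \<eta>"] blinfun.scaleR_right[of "DgB (t *\<^sub>R \<eta>)" t v] by simp
      then show "(t ^ k) *\<^sub>R frechet_derivative g (at (t *\<^sub>R \<eta>)) (t *\<^sub>R v) = blinfun_apply (fx \<eta> t) v"
        by (simp add: fx_def DgB_apply mult.commute scaleR_blinfun.rep_eq)
    qed
    ultimately show ?thesis by simp
  qed
  have cint: "continuous_on {0..1} (\<lambda>t. (t ^ k) *\<^sub>R g (t *\<^sub>R \<eta>))" for \<eta> :: "real^'m"
    by (intro continuous_intros continuous_on_compose2[OF cg]) auto
  have intg: "(\<lambda>t. (t ^ k) *\<^sub>R g (t *\<^sub>R \<eta>)) integrable_on cbox 0 1" for \<eta> :: "real^'m"
    using integrable_continuous_interval[OF cint] by simp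
  have cfx2: "continuous_on UNIV (\<lambda>p::(real^'m) \<times> real. DgB (snd p *\<^sub>R fst p))"
    by (rule continuous_on_compose2[OF cDgB]) (auto intro!: continuous_intros)
  have cfx: "continuous_on (UNIV \<times> cbox 0 1) (\<lambda>(\<eta>, t). fx \<eta> t)"
  proof -
    have "continuous_on UNIV (\<lambda>p::(real^'m) \<times> real. (snd p ^ Suc k) *\<^sub>R DgB (snd p *\<^sub>R fst p))"
      by (intro continuous_intros cfx2)
    then show ?thesis unfolding fx_def case_prod_beta by (rule continuous_on_subset) simp
  qed
  have L: "(Iint k g has_derivative blinfun_apply (integral (cbox 0 1) (fx \<eta>))) (at \<eta>)" for \<eta>
  proof -
    have "((\<lambda>\<eta>. integral (cbox 0 1) (\<lambda>t. (t ^ k) *\<^sub>R g (t *\<^sub>R \<eta>))) has_derivative integral (cbox 0 1) (fx \<eta>)) (at \<eta> within UNIV)"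
      by (rule leibniz_rule[where U=UNIV]) (use der intg cfx in auto)
    then show ?thesis unfolding Iint_def[abs_def] by simp
  qed
  have cfx1: "continuous_on {0..1} (fx \<eta>)" for \<eta>
    unfolding fx_def
    by (intro continuous_intros continuous_on_compose2[OF cDgB]) auto
  have "partial i (Iint k g) \<eta> = Iint (Suc k) (partial i g) \<eta>" for \<eta>
  proof -
    have "partial i (Iint k g) \<eta> = blinfun_apply (integral (cbox 0 1) (fx \<eta>)) (axis i 1)"
      using partial_eq[OF L] .
    also have "\<dots> = integral (cbox 0 1) (\<lambda>t. blinfun_apply (fx \<eta> t) (axis i 1))"
      by (rule blinfun_apply_integral) (use integrable_continuous_interval[OF cfx1] in simp)
    also have "\<dots> = Iint (Suc k) (partial i g) \<eta>"
      unfolding Iint_def fx_def by (simp add: DgB_apply partial_def scaleR_blinfun.rep_eq)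
    finally show ?thesis .
  qed
  then show ?thesis using L differentiable_def by blast
qed

lemma smk_Iint: "smooth (g :: real^'m::finite \<Rightarrow> 'b::banach) \<Longrightarrow> smk N (Iint k g)"
proof (induction N arbitrary: g k)
  case (Suc N)
  have "smk N (partial i (Iint k g))" for i
    using Iint_deriv[OF Suc.prems, of k i] Suc.IH[OF smooth_partial[OF Suc.prems]] by simp
  then show ?case using Iint_deriv[OF Suc.prems] by simp
qed simp

lemma smooth_Iint: "smooth (g :: real^'m::finite \<Rightarrow> 'b::banach) \<Longrightarrow> smooth (Iint k g)"
  using smk_Iint smooth_smk by blast

lemma hadamard:
  fixes \<psi> :: "real^'m::finite \<Rightarrow> 'b::banach"
  assumes \<psi>: "smooth \<psi>"
  shows "\<psi> \<eta> = \<psi> 0 + (\<Sum>j\<in>UNIV. (\<eta> $ j) *\<^sub>R Iint 0 (partial j \<psi>) \<eta>)"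
proof -
  define F' where "F' t = (\<Sum>j\<in>UNIV. (\<eta> $ j) *\<^sub>R partial j \<psi> (t *\<^sub>R \<eta>))" for t :: real
  have hd: "(\<psi> has_derivative frechet_derivative \<psi> (at z)) (at z)" for z
    using \<psi> smooth_diff fdw by blast
  have vd: "((\<lambda>t. \<psi> (t *\<^sub>R \<eta>)) has_vector_derivative F' t) (at t within {0..1})" for t
  proof -
    have "((\<lambda>t. t *\<^sub>R \<eta>) has_derivative (\<lambda>s. s *\<^sub>R \<eta>)) (at t)"
      by (intro derivative_eq_intros) auto
    from diff_chain_at[OF this hd]
    have "((\<lambda>t. \<psi> (t *\<^sub>R \<eta>)) has_derivative (\<lambda>s. frechet_derivative \<psi> (at (t *\<^sub>R \<eta>)) (s *\<^sub>R \<eta>))) (at t)"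
      by (simp add: o_def)
    moreover have "frechet_derivative \<psi> (at (t *\<^sub>R \<eta>)) (s *\<^sub>R \<eta>) = s *\<^sub>R F' t" for s
    proof -
      have lin: "linear (frechet_derivative \<psi> (at (t *\<^sub>R \<eta>)))" using hd has_derivative_linear by blast
      have "frechet_derivative \<psi> (at (t *\<^sub>R \<eta>)) (s *\<^sub>R \<eta>) = s *\<^sub>R frechet_derivative \<psi> (at (t *\<^sub>R \<eta>)) \<eta>"
        using lin by (simp add: linear_cmul)
      then show ?thesis using fd_expand[OF hd[of "t *\<^sub>R \<eta>"], of \<eta>] by (simp add: F'_def)
    qed
    ultimately have "((\<lambda>t. \<psi> (t *\<^sub>R \<eta>)) has_vector_derivative F' t) (at t)"
      by (simp add: has_vector_derivative_def)
    then show ?thesis using has_vector_derivative_at_within by blast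
  qed
  have ftc: "(F' has_integral (\<psi> (1 *\<^sub>R \<eta>) - \<psi> (0 *\<^sub>R \<eta>))) {0..1}"
    by (rule fundamental_theorem_of_calculus) (use vd in auto)
  have cp: "continuous_on {0..1} (\<lambda>t. partial j \<psi> (t *\<^sub>R \<eta>))" for j
    by (intro continuous_on_compose2[OF smooth_continuous[OF smooth_partial[OF \<psi>]]] continuous_intros) auto
  have "(F' has_integral (\<Sum>j\<in>UNIV. (\<eta> $ j) *\<^sub>R Iint 0 (partial j \<psi>) \<eta>)) {0..1}"
    unfolding F'_def
  proof (rule has_integral_sum)
    fix j :: 'm
    have "((\<lambda>t. partial j \<psi> (t *\<^sub>R \<eta>)) has_integral Iint 0 (partial j \<psi>) \<eta>) {0..1}"
      unfolding Iint_def using integrable_integral[OF integrable_continuous_interval[OF cp[of j]]] by simp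
    then show "((\<lambda>t. (\<eta> $ j) *\<^sub>R partial j \<psi> (t *\<^sub>R \<eta>)) has_integral ((\<eta> $ j) *\<^sub>R Iint 0 (partial j \<psi>) \<eta>)) {0..1}"
      by (rule has_integral_cmul)
  qed simp
  from has_integral_unique[OF ftc this]
  have "\<psi> \<eta> - \<psi> 0 = (\<Sum>j\<in>UNIV. (\<eta> $ j) *\<^sub>R Iint 0 (partial j \<psi>) \<eta>)"
    by simp
  then show ?thesis by (simp add: algebra_simps)
qed



lemma cscaleL_comp: "cscaleL J c id_blinfun o\<^sub>L T = cscaleL J c T"
  by (rule blinfun_eqI) (simp add: cscaleL_def blinfun.add_left blinfun.scaleR_left scaleR_blinfun.rep_eq plus_blinfun.rep_eq)

lemma cscaleL_zero: "cscaleL J 0 T = 0"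
  by (simp add: cscaleL_def)

lemma cscaleL_real: "cscaleL J (complex_of_real r) T = r *\<^sub>R T"
  by (simp add: cscaleL_def)

lemma blinfun_eq_on_dense:
  fixes T S :: "'x::real_normed_vector \<Rightarrow>\<^sub>L 'x"
  assumes d: "closure D = UNIV" and eq: "\<And>x. x \<in> D \<Longrightarrow> T x = S x"
  shows "T = S"
proof -
  have c: "closed {x. T x = S x}"
    by (rule closed_Collect_eq) (simp_all add: linear_continuous_on blinfun.bounded_linear_right)
  have "D \<subseteq> {x. T x = S x}" using eq by blast
  then have "closure D \<subseteq> {x. T x = S x}" using c closure_minimal by blast
  then show ?thesis using d by (intro blinfun_eqI) auto
qed

locale hyp =
  fixes J :: "'x::banach \<Rightarrow>\<^sub>L 'x" and A :: "(real^'n::finite \<Rightarrow> complex) \<Rightarrow> ('x \<Rightarrow>\<^sub>L 'x)"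
  assumes H: "hyperoperator J A"
begin

lemmas H' = H[unfolded hyperoperator_def]

lemma hadd: "test_fn \<phi> \<Longrightarrow> test_fn \<psi> \<Longrightarrow> A (\<lambda>x. \<phi> x + \<psi> x) = A \<phi> + A \<psi>"
  using H'[THEN conjunct2, THEN conjunct1] by blast
lemma hscal: "test_fn \<phi> \<Longrightarrow> A (\<lambda>x. c * \<phi> x) = cscaleL J c (A \<phi>)"
  using H'[THEN conjunct2, THEN conjunct2, THEN conjunct1] by blast
lemma hmult: "test_fn \<phi> \<Longrightarrow> test_fn \<psi> \<Longrightarrow> A (\<lambda>x. \<phi> x * \<psi> x) = A \<phi> o\<^sub>L A \<psi>"
  using H'[THEN conjunct2, THEN conjunct2, THEN conjunct2, THEN conjunct2, THEN conjunct1] by blast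
lemma hdense: "closure (D_A A) = UNIV"
  using H'[THEN conjunct2, THEN conjunct2, THEN conjunct2, THEN conjunct2, THEN conjunct2, THEN conjunct1]
  unfolding D_A_def .
lemma hker: "(\<And>\<phi>. test_fn \<phi> \<Longrightarrow> blinfun_apply (A \<phi>) x = 0) \<Longrightarrow> x = 0"
  using H'[THEN conjunct2, THEN conjunct2, THEN conjunct2, THEN conjunct2, THEN conjunct2, THEN conjunct2] by blast

lemma A_zero: "A (\<lambda>x. 0) = 0"
  using hadd[OF test_fn_zero test_fn_zero] by simp

lemma A_sum: "finite S \<Longrightarrow> (\<And>j. j \<in> S \<Longrightarrow> test_fn (g j)) \<Longrightarrow> A (\<lambda>x. \<Sum>j\<in>S. g j x) = (\<Sum>j\<in>S. A (g j))"
proof (induction S rule: finite_induct)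
  case empty then show ?case using A_zero by simp
next
  case (insert a F)
  have "A (\<lambda>x. \<Sum>j\<in>insert a F. g j x) = A (\<lambda>x. g a x + (\<Sum>j\<in>F. g j x))"
    using insert.hyps by simp
  also have "\<dots> = A (g a) + A (\<lambda>x. \<Sum>j\<in>F. g j x)"
    by (rule hadd) (use insert.prems test_fn_sum[OF insert.hyps(1), of g] in auto)
  finally show ?case using insert by simp
qed

lemma fcalc_repr:
  assumes "x \<in> D_A A"
  obtains \<phi> y where "test_fn \<phi>" "x = blinfun_apply (A \<phi>) y"
    "fcalc A f x = (\<lambda>j. blinfun_apply (A (\<lambda>\<xi>. complex_of_real (f \<xi> $ j) * \<phi> \<xi>)) y)"
proof -
  define p where "p = (SOME (\<phi>, y). test_fn \<phi> \<and> x = blinfun_apply (A \<phi>) y)"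
  have ex: "\<exists>p. (\<lambda>(\<phi>, y). test_fn \<phi> \<and> x = blinfun_apply (A \<phi>) y) p"
    using assms unfolding D_A_def by auto
  have "(\<lambda>(\<phi>, y). test_fn \<phi> \<and> x = blinfun_apply (A \<phi>) y) p"
    unfolding p_def using someI_ex[OF ex] .
  moreover obtain \<phi> y where pe: "p = (\<phi>, y)" by (cases p)
  ultimately have "test_fn \<phi>" "x = blinfun_apply (A \<phi>) y" by auto
  moreover have "fcalc A f x = (\<lambda>j. blinfun_apply (A (\<lambda>\<xi>. complex_of_real (f \<xi> $ j) * \<phi> \<xi>)) y)"
    unfolding fcalc_def p_def[symmetric] pe by simp
  ultimately show ?thesis using that by blast
qed

lemma claimC:
  fixes f :: "real^'n \<Rightarrow> real^'m::finite"
  assumes f: "smooth f"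
  shows "(\<forall>x\<in>D_A A. fcalc A f x = (\<lambda>j. 0)) \<longleftrightarrow>
         (\<forall>j \<phi>. test_fn \<phi> \<longrightarrow> A (\<lambda>\<xi>. complex_of_real (f \<xi> $ j) * \<phi> \<xi>) = 0)"
proof
  assume Z: "\<forall>j \<phi>. test_fn \<phi> \<longrightarrow> A (\<lambda>\<xi>. complex_of_real (f \<xi> $ j) * \<phi> \<xi>) = 0"
  show "\<forall>x\<in>D_A A. fcalc A f x = (\<lambda>j. 0)"
  proof
    fix x assume "x \<in> D_A A"
    then obtain \<phi> y where "test_fn \<phi>"
      "fcalc A f x = (\<lambda>j. blinfun_apply (A (\<lambda>\<xi>. complex_of_real (f \<xi> $ j) * \<phi> \<xi>)) y)"
      using fcalc_repr by blast
    then show "fcalc A f x = (\<lambda>j. 0)" using Z by simp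
  qed
next
  assume F: "\<forall>x\<in>D_A A. fcalc A f x = (\<lambda>j. 0)"
  show "\<forall>j \<phi>. test_fn \<phi> \<longrightarrow> A (\<lambda>\<xi>. complex_of_real (f \<xi> $ j) * \<phi> \<xi>) = 0"
  proof (intro allI impI)
    fix j \<phi> assume t\<phi>: "test_fn (\<phi> :: real^'n \<Rightarrow> complex)"
    define fj where "fj = (\<lambda>\<xi>. complex_of_real (f \<xi> $ j))"
    have sfj: "smooth fj" unfolding fj_def by (intro smooth_of_real smooth_comp_nth f)
    have tm: "test_fn (\<lambda>\<xi>. fj \<xi> * \<psi> \<xi>)" if "test_fn \<psi>" for \<psi>
      using test_fn_mult[OF sfj that] .
    show "A (\<lambda>\<xi>. complex_of_real (f \<xi> $ j) * \<phi> \<xi>) = 0"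
    proof (rule blinfun_eqI)
      fix y
      define x where "x = blinfun_apply (A \<phi>) y"
      have xD: "x \<in> D_A A" unfolding x_def D_A_def using t\<phi> by blast
      obtain \<phi>0 y0 where t0: "test_fn \<phi>0" and x0: "x = blinfun_apply (A \<phi>0) y0"
        and fc: "fcalc A f x = (\<lambda>j. blinfun_apply (A (\<lambda>\<xi>. complex_of_real (f \<xi> $ j) * \<phi>0 \<xi>)) y0)"
        using fcalc_repr[OF xD] by blast
      have z0: "blinfun_apply (A (\<lambda>\<xi>. fj \<xi> * \<phi>0 \<xi>)) y0 = 0"
        using F xD fc unfolding fj_def by (metis)
      have "blinfun_apply (A (\<lambda>\<xi>. fj \<xi> * \<phi> \<xi>)) y = 0"
      proof (rule hker)
        fix \<psi> :: "real^'n \<Rightarrow> complex" assume t\<psi>: "test_fn \<psi>"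
        have "blinfun_apply (A \<psi>) (blinfun_apply (A (\<lambda>\<xi>. fj \<xi> * \<phi> \<xi>)) y)
            = blinfun_apply (A (\<lambda>\<xi>. \<psi> \<xi> * (fj \<xi> * \<phi> \<xi>))) y"
          using hmult[OF t\<psi> tm[OF t\<phi>]] by simp
        also have "(\<lambda>\<xi>. \<psi> \<xi> * (fj \<xi> * \<phi> \<xi>)) = (\<lambda>\<xi>. (fj \<xi> * \<psi> \<xi>) * \<phi> \<xi>)"
          by (simp add: mult_ac)
        also have "blinfun_apply (A (\<lambda>\<xi>. (fj \<xi> * \<psi> \<xi>) * \<phi> \<xi>)) y
            = blinfun_apply (A (\<lambda>\<xi>. fj \<xi> * \<psi> \<xi>)) x"
          using hmult[OF tm[OF t\<psi>] t\<phi>] by (simp add: x_def)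
        also have "\<dots> = blinfun_apply (A (\<lambda>\<xi>. (fj \<xi> * \<psi> \<xi>) * \<phi>0 \<xi>)) y0"
          using hmult[OF tm[OF t\<psi>] t0] by (simp add: x0)
        also have "(\<lambda>\<xi>. (fj \<xi> * \<psi> \<xi>) * \<phi>0 \<xi>) = (\<lambda>\<xi>. \<psi> \<xi> * (fj \<xi> * \<phi>0 \<xi>))"
          by (simp add: mult_ac)
        also have "blinfun_apply (A (\<lambda>\<xi>. \<psi> \<xi> * (fj \<xi> * \<phi>0 \<xi>))) y0 = 0"
          using hmult[OF t\<psi> tm[OF t0]] z0 by simp
        finally show "blinfun_apply (A \<psi>) (blinfun_apply (A (\<lambda>\<xi>. fj \<xi> * \<phi> \<xi>)) y) = 0" .
      qed
      then show "blinfun_apply (A (\<lambda>\<xi>. complex_of_real (f \<xi> $ j) * \<phi> \<xi>)) y = blinfun_apply 0 y"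
        unfolding fj_def by simp
    qed
  qed
qed

end



lemma blinfun_comp_scale_id: "T o\<^sub>L (r *\<^sub>R id_blinfun) = r *\<^sub>R T"
  by (rule blinfun_eqI) (simp add: scaleR_blinfun.rep_eq blinfun.scaleR_right)

lemma blinfun_comp_zero': "T o\<^sub>L 0 = 0"
  by (rule blinfun_eqI) simp

context hyp begin

lemma main_gen:
  fixes f :: "real^'n \<Rightarrow> real^'m::finite"
  assumes f: "smooth f" "proper_fun f"
  shows "is_zero_hyp J (pushforward f A) \<longleftrightarrow>
         (\<forall>j \<phi>. test_fn \<phi> \<longrightarrow> A (\<lambda>\<xi>. complex_of_real (f \<xi> $ j) * \<phi> \<xi>) = 0)"
proof
  assume Z: "\<forall>j \<phi>. test_fn \<phi> \<longrightarrow> A (\<lambda>\<xi>. complex_of_real (f \<xi> $ j) * \<phi> \<xi>) = 0"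
  show "is_zero_hyp J (pushforward f A)"
    unfolding is_zero_hyp_def pushforward_def
  proof (intro allI impI)
    fix \<psi> :: "real^'m \<Rightarrow> complex" assume t\<psi>: "test_fn \<psi>"
    have s\<psi>: "smooth \<psi>" using t\<psi> test_fn_smooth by blast
    define h where "h j = Iint 0 (partial j \<psi>)" for j
    have sh: "smooth (h j)" for j unfolding h_def by (intro smooth_Iint smooth_partial s\<psi>)
    have t\<psi>f: "test_fn (\<lambda>\<xi>. \<psi> (f \<xi>))" using test_fn_comp[OF f t\<psi>] .
    have key: "A (\<lambda>\<xi>. \<psi> (f \<xi>)) o\<^sub>L A \<phi> = cscaleL J (\<psi> 0) id_blinfun o\<^sub>L A \<phi>" if t\<phi>: "test_fn \<phi>" for \<phi>
    proof -
      define g where "g j = (\<lambda>\<xi>. complex_of_real (f \<xi> $ j) * (h j (f \<xi>) * \<phi> \<xi>))" for j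
      have tin: "test_fn (\<lambda>\<xi>. h j (f \<xi>) * \<phi> \<xi>)" for j
        by (rule test_fn_mult[OF smooth_comp[OF f(1) sh] t\<phi>])
      have tg: "test_fn (g j)" for j
        unfolding g_def by (rule test_fn_mult[OF smooth_of_real[OF smooth_comp_nth[OF f(1)]] tin])
      have Ag: "A (g j) = 0" for j unfolding g_def using Z tin by blast
      have eqf: "(\<lambda>\<xi>. \<psi> (f \<xi>) * \<phi> \<xi>) = (\<lambda>\<xi>. \<psi> 0 * \<phi> \<xi> + (\<Sum>j\<in>UNIV. g j \<xi>))"
      proof
        fix \<xi>
        have "\<psi> (f \<xi>) = \<psi> 0 + (\<Sum>j\<in>UNIV. (f \<xi> $ j) *\<^sub>R h j (f \<xi>))"
          using hadamard[OF s\<psi>, of "f \<xi>"] unfolding h_def by simp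
        then show "\<psi> (f \<xi>) * \<phi> \<xi> = \<psi> 0 * \<phi> \<xi> + (\<Sum>j\<in>UNIV. g j \<xi>)"
          by (simp add: g_def distrib_right sum_distrib_right scaleR_conv_of_real mult.assoc)
      qed
      have "A (\<lambda>\<xi>. \<psi> (f \<xi>)) o\<^sub>L A \<phi> = A (\<lambda>\<xi>. \<psi> (f \<xi>) * \<phi> \<xi>)"
        using hmult[OF t\<psi>f t\<phi>] by simp
      also have "\<dots> = A (\<lambda>\<xi>. \<psi> 0 * \<phi> \<xi>) + A (\<lambda>\<xi>. \<Sum>j\<in>UNIV. g j \<xi>)"
        unfolding eqf
        by (rule hadd) (use test_fn_mult[OF smooth_const t\<phi>] test_fn_sum[of UNIV g] tg in auto)
      also have "\<dots> = cscaleL J (\<psi> 0) (A \<phi>)"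
        using hscal[OF t\<phi>] A_sum[of UNIV g] tg Ag by simp
      finally show ?thesis using cscaleL_comp by metis
    qed
    show "A (\<psi> \<circ> f) = cscaleL J (\<psi> 0) id_blinfun"
      unfolding o_def
    proof (rule blinfun_eq_on_dense[OF hdense])
      fix x assume "x \<in> D_A A"
      then obtain \<phi> y where t\<phi>: "test_fn \<phi>" and x: "x = blinfun_apply (A \<phi>) y"
        unfolding D_A_def by blast
      show "blinfun_apply (A (\<lambda>\<xi>. \<psi> (f \<xi>))) x = blinfun_apply (cscaleL J (\<psi> 0) id_blinfun) x"
        using arg_cong[OF key[OF t\<phi>], of "\<lambda>T. blinfun_apply T y"] x by simp
    qed
  qed
next
  assume I: "is_zero_hyp J (pushforward f A)"
  have I': "A (\<lambda>\<xi>. \<psi> (f \<xi>)) = cscaleL J (\<psi> 0) id_blinfun" if "test_fn \<psi>" for \<psi>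
    using I that unfolding is_zero_hyp_def pushforward_def o_def by blast
  obtain \<beta> :: "real^'m \<Rightarrow> real" where s\<beta>: "smooth \<beta>" and t\<beta>: "test_fn (\<lambda>x. complex_of_real (\<beta> x))"
    and \<beta>0: "\<beta> 0 = exp (-1)"
    using bump_exists by blast
  show "\<forall>j \<phi>. test_fn \<phi> \<longrightarrow> A (\<lambda>\<xi>. complex_of_real (f \<xi> $ j) * \<phi> \<xi>) = 0"
  proof (intro allI impI)
    fix j \<phi> assume t\<phi>: "test_fn (\<phi> :: real^'n \<Rightarrow> complex)"
    define fj where "fj = (\<lambda>\<xi>. complex_of_real (f \<xi> $ j))"
    define B where "B = (\<lambda>x. complex_of_real (\<beta> x))"
    define \<psi> where "\<psi> = (\<lambda>\<eta>::real^'m. complex_of_real (\<eta> $ j) * B \<eta>)"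
    have t\<psi>: "test_fn \<psi>" unfolding \<psi>_def B_def
      by (rule test_fn_mult[OF smooth_of_real[OF smooth_comp_nth[OF smooth_id]] t\<beta>])
    have tfj: "test_fn (\<lambda>\<xi>. fj \<xi> * \<phi> \<xi>)" unfolding fj_def
      by (rule test_fn_mult[OF smooth_of_real[OF smooth_comp_nth[OF f(1)]] t\<phi>])
    have tBf: "test_fn (\<lambda>\<xi>. B (f \<xi>))" unfolding B_def using test_fn_comp[OF f t\<beta>] .
    have t\<psi>f: "test_fn (\<lambda>\<xi>. \<psi> (f \<xi>))" using test_fn_comp[OF f t\<psi>] .
    have A\<psi>: "A (\<lambda>\<xi>. \<psi> (f \<xi>)) = 0" using I'[OF t\<psi>] by (simp add: \<psi>_def cscaleL_zero)
    have AB: "A (\<lambda>\<xi>. B (f \<xi>)) = exp (-1) *\<^sub>R id_blinfun"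
      using I'[OF t\<beta>] \<beta>0 by (simp add: B_def cscaleL_real)
    have "exp (-1) *\<^sub>R A (\<lambda>\<xi>. fj \<xi> * \<phi> \<xi>) = A (\<lambda>\<xi>. fj \<xi> * \<phi> \<xi>) o\<^sub>L A (\<lambda>\<xi>. B (f \<xi>))"
      using AB blinfun_comp_scale_id by metis
    also have "\<dots> = A (\<lambda>\<xi>. (fj \<xi> * \<phi> \<xi>) * B (f \<xi>))"
      using hmult[OF tfj tBf] by simp
    also have "(\<lambda>\<xi>. (fj \<xi> * \<phi> \<xi>) * B (f \<xi>)) = (\<lambda>\<xi>. \<phi> \<xi> * \<psi> (f \<xi>))"
      by (simp add: fj_def \<psi>_def mult_ac)
    also have "A (\<lambda>\<xi>. \<phi> \<xi> * \<psi> (f \<xi>)) = A \<phi> o\<^sub>L A (\<lambda>\<xi>. \<psi> (f \<xi>))"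
      using hmult[OF t\<phi> t\<psi>f] by simp
    also have "\<dots> = 0" using A\<psi> blinfun_comp_zero' by simp
    finally have "exp (-1) *\<^sub>R A (\<lambda>\<xi>. fj \<xi> * \<phi> \<xi>) = 0" .
    then show "A (\<lambda>\<xi>. complex_of_real (f \<xi> $ j) * \<phi> \<xi>) = 0"
      unfolding fj_def by simp
  qed
qed

lemma main_full:
  fixes f :: "real^'n \<Rightarrow> real^'m::finite"
  assumes f: "smooth f" "proper_fun f"
  shows "is_zero_hyp J (pushforward f A) \<longleftrightarrow> (\<forall>x\<in>D_A A. fcalc A f x = (\<lambda>j. 0))"
  using main_gen[OF f] claimC[OF f(1)] by simp

end

theorem corollary4p3:
  fixes J :: "'x::banach \<Rightarrow>\<^sub>L 'x"
    and A :: "(real^'n::finite \<Rightarrow> complex) \<Rightarrow> ('x \<Rightarrow>\<^sub>L 'x)"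
    and f :: "real^'n \<Rightarrow> real^'m::finite"
  assumes "complex_structure J"
    and "hyperoperator J A"
    and "smooth f"
    and "proper_fun f"
  shows "(is_zero_hyp J (pushforward f A) \<longleftrightarrow> (\<forall>x\<in>D_A A. fcalc A f x = (\<lambda>j. 0)))
       \<and> (is_zero_hyp J A \<longleftrightarrow> (\<forall>x\<in>D_A A. fcalc A (\<lambda>\<xi>::real^'n. \<xi>) x = (\<lambda>j. 0)))"
proof -
  interpret hyp J A using assms(2) by unfold_locales
  have 1: "is_zero_hyp J (pushforward f A) \<longleftrightarrow> (\<forall>x\<in>D_A A. fcalc A f x = (\<lambda>j. 0))"
    using main_full[OF assms(3,4)] .
  have pid: "proper_fun (\<lambda>\<xi>::real^'n. \<xi>)" unfolding proper_fun_def by simp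
  have pA: "pushforward (\<lambda>\<xi>::real^'n. \<xi>) A = A" unfolding pushforward_def o_def by simp
  have 2: "is_zero_hyp J A \<longleftrightarrow> (\<forall>x\<in>D_A A. fcalc A (\<lambda>\<xi>::real^'n. \<xi>) x = (\<lambda>j. 0))"
    using main_full[OF smooth_id pid] unfolding pA .
  show ?thesis using 1 2 by blast
qed


end
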